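(* Let $\eta>0$ and let $p_\infty$ be the probability density $$p_\infty(x)=\frac{2^{2/\eta^2}\,\eta^{1-4/\eta^2}}{\Gamma(2/\eta^2)}\exp\!\Big(-\frac{2}{\eta^2}\frac{1}{1+\eta x}\Big)(1+\eta x)^{-2-2/\eta^2}\ \text{ for } x>-\tfrac1\eta,\qquad p_\infty(x)=0 \text{ for } x\le-\tfrac1\eta.$$ Then for a positive integer $k$, $\int_{\mathbb{R}}|x|^k p_\infty(x)\,\mathrm{d}x<\infty$ if and only if $\eta<\sqrt{2/(k-1)}$ (interpreted as always true for $k=1$). Moreover $\int_{\mathbb{R}}x\,p_\infty(x)\,\mathrm{d}x=0$, and if $\eta^2<2$ then $\int_{\mathbb{R}}x^2p_\infty(x)\,\mathrm{d}x=\dfrac{1}{2-\eta^2}$.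
   Context: $\Gamma$ denotes the Gamma function. The density $p_\infty$ is the stationary density of the SDE $\mathrm{d}x_t=-x_t\,\mathrm{d}t+(1+\eta x_t)\,\mathrm{d}W_t$. *)

theory Defs
  imports "HOL-Analysis.Analysis"
begin

text \<open>Stationary density of dx = -x dt + (1 + eta x) dW, for eta > 0.\<close>
definition p_inf :: "real \<Rightarrow> real \<Rightarrow> real" where
  "p_inf \<eta> x =
     (if x > - 1 / \<eta> then
        (2 powr (2 / \<eta>\<^sup>2) * \<eta> powr (1 - 4 / \<eta>\<^sup>2) / Gamma (2 / \<eta>\<^sup>2))
        * exp (- (2 / \<eta>\<^sup>2) * (1 / (1 + \<eta> * x)))
        * (1 + \<eta> * x) powr (- 2 - 2 / \<eta>\<^sup>2)
      else 0)"

end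

theory Submission
  imports Defs
begin


lemma gamma_T:
  assumes "s > (0::real)"
  shows "((\<lambda>u. u powr (s-1) * exp (-u)) has_integral Gamma s) {0<..}"
proof -
  have "((\<lambda>u. u powr (s-1) * exp (-u)) has_integral Gamma s) {0..}"
    using Gamma_integral_real[OF assms] by (simp add: exp_minus field_simps)
  moreover have "((\<lambda>u. u powr (s-1) * exp (-u)) has_integral Gamma s) {0..} \<longleftrightarrow> ((\<lambda>u. u powr (s-1) * exp (-u)) has_integral Gamma s) {0<..}"
    by (rule has_integral_spike_set_eq; rule negligible_subset[of "{}"]; auto)
  ultimately show ?thesis by blast
qed

lemma gamma_T_abs:
  assumes "s > (0::real)"
  shows "(\<lambda>u. u powr (s-1) * exp (-u)) absolutely_integrable_on {0<..}"
  using gamma_T[OF assms] by (intro nonnegative_absolutely_integrable_1) (auto simp: has_integral_integrable)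

lemma p_meas: "p_inf e \<in> borel_measurable borel"
  unfolding p_inf_def by measurable

lemma lborel_to_S:
  fixes F :: "real \<Rightarrow> real"
  assumes meas: "F \<in> borel_measurable borel" and zero: "\<And>x. x \<notin> S \<Longrightarrow> F x = 0"
  shows "integrable lborel F \<longleftrightarrow> F absolutely_integrable_on S"
    and "integrable lborel F \<Longrightarrow> (\<integral>x. F x \<partial>lborel) = integral S F"
proof -
  have eq: "F = (\<lambda>x. if x \<in> S then F x else 0)" using zero by auto
  have "integrable lborel F \<longleftrightarrow> F absolutely_integrable_on UNIV"
    unfolding set_integrable_def using integrable_completion[of F lborel] meas by simp
  also have "\<dots> \<longleftrightarrow> F absolutely_integrable_on S"
    by (subst eq) (rule absolutely_integrable_restrict_UNIV)
  finally show "integrable lborel F \<longleftrightarrow> F absolutely_integrable_on S" .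
  assume "integrable lborel F"
  then have "(\<integral>x. F x \<partial>lborel) = integral UNIV F" by (simp add: integral_lborel)
  also have "\<dots> = integral S F" by (subst eq) (rule integral_restrict_UNIV)
  finally show "(\<integral>x. F x \<partial>lborel) = integral S F" .
qed

lemma cov:
  fixes F :: "real \<Rightarrow> real" and \<eta> a :: real
  assumes e: "\<eta> > 0" and a: "a > 0"
  defines "g \<equiv> \<lambda>u. (a/u - 1)/\<eta>" and "g' \<equiv> \<lambda>u. -a/(\<eta>*u\<^sup>2)"
  shows "((\<lambda>u. \<bar>g' u\<bar> * F (g u)) absolutely_integrable_on {0<..} \<and> integral {0<..} (\<lambda>u. \<bar>g' u\<bar> * F (g u)) = b)
     \<longleftrightarrow> (F absolutely_integrable_on {-1/\<eta><..} \<and> integral {-1/\<eta><..} F = b)"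
    and "(\<lambda>u. \<bar>g' u\<bar> * F (g u)) absolutely_integrable_on {0<..} \<longleftrightarrow> F absolutely_integrable_on {-1/\<eta><..}"
proof -
  have img: "g ` {0<..} = {-1/\<eta><..}"
  proof (intro equalityI subsetI)
    fix x assume "x \<in> g ` {0<..}"
    then obtain u where u: "u > 0" "x = g u" by auto
    have "a/u > 0" using u a by simp
    moreover have "\<eta>*x = a/u - 1" using u e by (simp add: g_def)
    ultimately have "\<eta>*x > -1" by linarith
    then show "x \<in> {-1/\<eta><..}" using e by (simp add: field_simps)
  next
    fix x assume x: "x \<in> {-1/\<eta><..}"
    then have p: "1 + \<eta>*x > 0" using e by (simp add: field_simps)
    define u where "u = a/(1+\<eta>*x)"
    have "u > 0" using p a by (simp add: u_def)
    moreover have "g u = x" using p e a by (simp add: g_def u_def field_simps)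
    ultimately show "x \<in> g ` {0<..}" by force
  qed
  have inj: "inj_on g {0<..}"
    using e a by (auto simp: inj_on_def g_def field_simps)
  have der: "(g has_field_derivative g' u) (at u within {0<..})" if "u \<in> {0<..}" for u
    using that e unfolding g_def g'_def
    by (auto intro!: derivative_eq_intros simp: field_simps power2_eq_square)
  show "((\<lambda>u. \<bar>g' u\<bar> * F (g u)) absolutely_integrable_on {0<..} \<and> integral {0<..} (\<lambda>u. \<bar>g' u\<bar> * F (g u)) = b)
     \<longleftrightarrow> (F absolutely_integrable_on {-1/\<eta><..} \<and> integral {-1/\<eta><..} F = b)"
    using has_absolute_integral_change_of_variables_1'[of "{0<..}" g g' F b] der inj img by auto
  show "(\<lambda>u. \<bar>g' u\<bar> * F (g u)) absolutely_integrable_on {0<..} \<longleftrightarrow> F absolutely_integrable_on {-1/\<eta><..}"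
    using absolutely_integrable_change_of_variables_real[of "{0<..}" g g' F] der inj img by auto
qed

lemma Gp1: "(x::real) > 0 \<Longrightarrow> Gamma (x+1) = x * Gamma x"
  by (rule Gamma_plus1) (auto elim!: nonpos_Ints_cases)

lemma pointwise:
  fixes \<eta> u :: real
  assumes e: "\<eta> > 0" and u: "u > 0"
  defines "a \<equiv> 2/\<eta>\<^sup>2"
  shows "\<bar>-a/(\<eta>*u\<^sup>2)\<bar> * p_inf \<eta> ((a/u - 1)/\<eta>) = u powr a * exp (-u) / Gamma (a+1)"
proof -
  have a: "a > 0" using e by (simp add: a_def)
  define x where "x = (a/u - 1)/\<eta>"
  have ex: "1 + \<eta>*x = a/u" using e by (simp add: x_def)
  have xS: "x > -1/\<eta>"
  proof -
    have "\<eta>*x > -1" using ex a u by (smt (verit) divide_pos_pos)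
    then show ?thesis using e by (simp add: field_simps)
  qed
  have c1: "2/\<eta>\<^sup>2 = a" "4/\<eta>\<^sup>2 = 2*a" by (simp_all add: a_def)
  have p: "p_inf \<eta> x = (2 powr a * \<eta> powr (1 - 2*a) / Gamma a) * exp (-u) * (a/u) powr (-2 - a)"
    unfolding p_inf_def using xS ex a u by (simp add: c1)
  have A1: "a powr a = 2 powr a * \<eta> powr (-2*a)"
  proof -
    have "a = 2 * \<eta> powr (-2)" using e by (simp add: a_def powr_minus powr_numeral divide_inverse)
    then have "a powr a = 2 powr a * (\<eta> powr (-2)) powr a" by (simp add: powr_mult)
    also have "(\<eta> powr (-2)) powr a = \<eta> powr (-2*a)" by (simp add: powr_powr)
    finally show ?thesis .
  qed
  have A2: "\<eta> powr (1 - 2*a) = \<eta> * \<eta> powr (-2*a)"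
  proof -
    have "\<eta> powr (1 - 2*a) = \<eta> powr (1 + (-2*a))" by simp
    also have "\<dots> = \<eta> * \<eta> powr (-2*a)" using e by (simp only: powr_add powr_one)
    finally show ?thesis .
  qed
  have H: "t powr (-2 - a) = 1 / (t\<^sup>2 * t powr a)" if "t > 0" for t :: real
  proof -
    have "t powr (-2 - a) = t powr (-(2 + a))" by simp
    also have "\<dots> = inverse (t powr (2 + a))" by (rule powr_minus)
    also have "\<dots> = inverse (t powr 2 * t powr a)" by (simp only: powr_add)
    finally show ?thesis using that by (simp add: divide_inverse)
  qed
  have A3: "(a/u) powr (-2 - a) = (u\<^sup>2 * u powr a) / (a\<^sup>2 * a powr a)"
    using a u by (simp add: powr_divide H)
  have A5: "Gamma (a+1) = a * Gamma a" using a by (simp add: Gp1)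
  have G: "Gamma a > 0" using a by (simp add: Gamma_real_pos)
  have pa: "a powr a > 0" "2 powr a > 0" "\<eta> powr (-2*a) > 0" using a e by auto
  have "\<bar>-a/(\<eta>*u\<^sup>2)\<bar> = a/(\<eta>*u\<^sup>2)" using a e u by simp
  then show ?thesis
    unfolding x_def[symmetric] p A3 A5 A2
    using a e u G pa by (simp add: A1 field_simps power2_eq_square)
qed

lemma q_pos:
  fixes a :: real and k :: nat
  assumes a: "a > 0" and ak: "a > real k - 1"
  shows "(\<lambda>u. \<bar>a-u\<bar>^k * u powr (a - real k) * exp (-u)) absolutely_integrable_on {0<..}"
proof (rule measurable_bounded_by_integrable_imp_absolutely_integrable)
  show "(\<lambda>u. \<bar>a-u\<bar>^k * u powr (a - real k) * exp (-u)) \<in> borel_measurable (lebesgue_on {0<..})"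
    by (rule continuous_imp_measurable_on_sets_lebesgue) (auto intro!: continuous_intros)
  show "{0<..} \<in> sets (lebesgue :: real measure)" by (rule sets_completionI_sets) (simp add: borel_open open_greaterThan)
  let ?G = "\<lambda>u. 2^k * (a^k * (u powr ((a - real k + 1) - 1) * exp (-u)) + u powr ((a+1) - 1) * exp (-u))"
  have i1: "(\<lambda>u. u powr ((a - real k + 1) - 1) * exp (-u)) integrable_on {0<..}"
    using gamma_T[of "a - real k + 1"] ak by (auto simp: has_integral_integrable)
  have i2: "(\<lambda>u. u powr ((a + 1) - 1) * exp (-u)) integrable_on {0<..}"
    using gamma_T[of "a + 1"] a by (auto simp: has_integral_integrable)
  show "?G integrable_on {0<..}"
    using i1 i2 a by (simp add: integrable_add)
  show "norm (\<bar>a-u\<bar>^k * u powr (a - real k) * exp (-u)) \<le> ?G u" if "u \<in> {0<..}" for u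
  proof -
    have u: "u > 0" using that by simp
    have "\<bar>a-u\<bar>^k \<le> (2 * max a u)^k"
      by (rule power_mono) (use a u in auto)
    also have "\<dots> = 2^k * max a u ^ k" by (simp add: power_mult_distrib)
    also have "\<dots> \<le> 2^k * (a^k + u^k)"
      using a u by (intro mult_left_mono) (auto simp: max_def)
    finally have b: "\<bar>a-u\<bar>^k \<le> 2^k * (a^k + u^k)" .
    have up: "u^k * u powr (a - real k) = u powr a"
      using u by (simp add: powr_diff powr_realpow)
    have "norm (\<bar>a-u\<bar>^k * u powr (a - real k) * exp (-u)) = \<bar>a-u\<bar>^k * (u powr (a - real k) * exp (-u))"
      by simp
    also have "\<dots> \<le> 2^k * (a^k + u^k) * (u powr (a - real k) * exp (-u))"
      by (rule mult_right_mono[OF b]) simp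
    also have "\<dots> = ?G u"
      using up by (simp add: algebra_simps)
    finally show ?thesis .
  qed
qed

lemma q_neg:
  fixes a :: real and k :: nat
  assumes a: "a > 0" and ak: "a \<le> real k - 1"
  shows "\<not> (\<lambda>u. \<bar>a-u\<bar>^k * u powr (a - real k) * exp (-u)) absolutely_integrable_on {0<..}"
proof
  let ?q = "\<lambda>u. \<bar>a-u\<bar>^k * u powr (a - real k) * exp (-u)"
  assume ai: "?q absolutely_integrable_on {0<..}"
  define I where "I = integral {0<..} ?q"
  define \<delta> where "\<delta> = min 1 (a/2)"
  define c where "c = (a/2)^k * exp (-1)"
  have d: "\<delta> > 0" "\<delta> \<le> 1" "\<delta> \<le> a/2" using a by (auto simp: \<delta>_def)
  have c: "c > 0" using a by (simp add: c_def)
  define \<epsilon> where "\<epsilon> = \<delta> * exp (-(\<bar>I\<bar>/c + 1))"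
  have "\<bar>I\<bar>/c \<ge> 0" using c by simp
  then have e1: "exp (-(\<bar>I\<bar>/c + 1)) < 1" by simp
  have ep: "\<epsilon> > 0" "\<epsilon> < \<delta>"
    unfolding \<epsilon>_def using d(1) apply simp
    using mult_strict_left_mono[OF e1 d(1)] by simp
  have lnep: "ln \<delta> - ln \<epsilon> = \<bar>I\<bar>/c + 1"
    using d by (simp add: \<epsilon>_def ln_mult)
  have low: "c / u \<le> ?q u" if "u \<in> {\<epsilon>..\<delta>}" for u
  proof -
    have u: "u > 0" "u \<le> 1" "u \<le> a/2" using that ep d by auto
    have "(a/2)^k \<le> \<bar>a-u\<bar>^k" by (rule power_mono) (use u a in auto)
    note A = this
    have B: "u powr (-1) \<le> u powr (a - real k)" by (rule powr_mono') (use u ak in auto)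
    have C: "exp (-1) \<le> exp (-u)" using u by simp
    have ineq: "(a/2)^k * u powr (-1) * exp (-1) \<le> ?q u"
      by (rule mult_mono[OF mult_mono[OF A B] C]) (use u in simp_all)
    have "u powr (-1) = 1/u" using u by (simp add: powr_minus_divide)
    then have "c / u = (a/2)^k * u powr (-1) * exp (-1)"
      unfolding c_def by simp
    then show ?thesis using ineq by linarith
  qed
  have sub: "?q absolutely_integrable_on {\<epsilon>..\<delta>}"
    using ai unfolding set_integrable_def[symmetric]
    by (rule set_integrable_subset) (use ep in auto)
  have iq: "?q integrable_on {\<epsilon>..\<delta>}" using sub set_lebesgue_integral_eq_integral(1) by blast
  have iqT: "?q integrable_on {0<..}" using ai set_lebesgue_integral_eq_integral(1) by blast
  have hc: "((\<lambda>u. c / u) has_integral (c * ln \<delta> - c * ln \<epsilon>)) {\<epsilon>..\<delta>}"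
    using ep
    by (intro fundamental_theorem_of_calculus)
       (auto intro!: derivative_eq_intros simp flip: has_real_derivative_iff_has_vector_derivative
             simp: field_simps)
  have "c * ln \<delta> - c * ln \<epsilon> \<le> integral {\<epsilon>..\<delta>} ?q"
    using integral_le[OF has_integral_integrable[OF hc] iq low] integral_unique[OF hc] by simp
  also have "\<dots> \<le> I" unfolding I_def
    by (rule integral_subset_le[OF _ iq iqT]) (use ep in auto)
  finally have "c * (ln \<delta> - ln \<epsilon>) \<le> I" by (simp add: algebra_simps)
  moreover have "c * (ln \<delta> - ln \<epsilon>) = \<bar>I\<bar> + c" using lnep c by (simp add: distrib_left)
  ultimately have "\<bar>I\<bar> + c \<le> I" by linarith
  then show False using c by linarith
qed


lemma transfer:
  fixes \<phi> h :: "real \<Rightarrow> real" and \<eta> :: real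
  assumes e: "\<eta> > 0" and \<phi>m: "\<phi> \<in> borel_measurable borel"
    and hh: "\<And>u. u > 0 \<Longrightarrow> \<phi> ((2/\<eta>\<^sup>2/u - 1)/\<eta>) * (u powr (2/\<eta>\<^sup>2) * exp (-u) / Gamma (2/\<eta>\<^sup>2 + 1)) = h u"
  shows "integrable lborel (\<lambda>x. \<phi> x * p_inf \<eta> x) \<longleftrightarrow> h absolutely_integrable_on {0<..}"
    and "h absolutely_integrable_on {0<..} \<Longrightarrow> (\<integral>x. \<phi> x * p_inf \<eta> x \<partial>lborel) = integral {0<..} h"
proof -
  define a where "a = 2/\<eta>\<^sup>2"
  have a: "a > 0" using e by (simp add: a_def)
  define F where "F = (\<lambda>x. \<phi> x * p_inf \<eta> x)"
  have Fm: "F \<in> borel_measurable borel" unfolding F_def using \<phi>m p_meas by measurable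
  have Fz: "F x = 0" if "x \<notin> {-1/\<eta><..}" for x using that by (simp add: F_def p_inf_def)
  let ?H = "\<lambda>u. \<bar>-a/(\<eta>*u\<^sup>2)\<bar> * F ((a/u - 1)/\<eta>)"
  have Hh: "?H u = h u" if "u \<in> {0<..}" for u
  proof -
    have u: "u > 0" using that by simp
    have "?H u = \<phi> ((a/u - 1)/\<eta>) * (\<bar>-a/(\<eta>*u\<^sup>2)\<bar> * p_inf \<eta> ((a/u - 1)/\<eta>))"
      by (simp add: F_def)
    also have "\<dots> = h u" using pointwise[OF e u] hh[OF u] by (simp add: a_def)
    finally show ?thesis .
  qed
  have eqi: "?H absolutely_integrable_on {0<..} \<longleftrightarrow> h absolutely_integrable_on {0<..}"
    by (rule absolutely_integrable_spike_eq[of "{}"]) (use Hh in auto)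
  have eqint: "integral {0<..} ?H = integral {0<..} h"
    by (rule integral_cong) (use Hh in auto)
  have L1: "integrable lborel F \<longleftrightarrow> F absolutely_integrable_on {-1/\<eta><..}"
    by (rule lborel_to_S(1)[of F "{-1/\<eta><..}", OF Fm Fz])
  have L2: "integrable lborel F \<Longrightarrow> (\<integral>x. F x \<partial>lborel) = integral {-1/\<eta><..} F"
    by (rule lborel_to_S(2)[of F "{-1/\<eta><..}", OF Fm Fz])
  have C2: "?H absolutely_integrable_on {0<..} \<longleftrightarrow> F absolutely_integrable_on {-1/\<eta><..}"
    by (rule cov(2)[OF e a])
  show "integrable lborel (\<lambda>x. \<phi> x * p_inf \<eta> x) \<longleftrightarrow> h absolutely_integrable_on {0<..}"
    using L1 C2 eqi unfolding F_def by simp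
  assume hi: "h absolutely_integrable_on {0<..}"
  have C1: "(?H absolutely_integrable_on {0<..} \<and> integral {0<..} ?H = integral {0<..} h)
     \<longleftrightarrow> (F absolutely_integrable_on {-1/\<eta><..} \<and> integral {-1/\<eta><..} F = integral {0<..} h)"
    by (rule cov(1)[OF e a])
  have "F absolutely_integrable_on {-1/\<eta><..} \<and> integral {-1/\<eta><..} F = integral {0<..} h"
    using C1 eqi eqint hi by simp
  then show "(\<integral>x. \<phi> x * p_inf \<eta> x \<partial>lborel) = integral {0<..} h"
    using L1 L2 unfolding F_def by simp
qed


lemma partA:
  fixes \<eta> :: real and k :: nat
  assumes e: "\<eta> > 0" and k: "k \<ge> 1"
  shows "integrable lborel (\<lambda>x. \<bar>x\<bar> ^ k * p_inf \<eta> x) \<longleftrightarrow> 2/\<eta>\<^sup>2 > real k - 1"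
proof -
  define a where "a = 2/\<eta>\<^sup>2"
  have a: "a > 0" using e by (simp add: a_def)
  define C where "C = 1 / (\<eta>^k * Gamma (a+1))"
  have G1: "Gamma (a+1) > 0" using a by (intro Gamma_real_pos) simp
  have G2: "Gamma (a+1) \<noteq> 0" using G1 by linarith
  have C: "C \<noteq> 0" using e G2 by (simp add: C_def)
  let ?q = "\<lambda>u. \<bar>a-u\<bar>^k * u powr (a - real k) * exp (-u)"
  have hh: "\<bar>(2/\<eta>\<^sup>2/u - 1)/\<eta>\<bar> ^ k * (u powr (2/\<eta>\<^sup>2) * exp (-u) / Gamma (2/\<eta>\<^sup>2 + 1)) = C * ?q u"
    if u: "u > 0" for u
  proof -
    have "(a/u - 1)/\<eta> = (a - u) / (\<eta> * u)" using u e by (simp add: field_simps)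
    then have "\<bar>(a/u - 1)/\<eta>\<bar> ^ k = \<bar>a-u\<bar>^k / (\<eta>^k * u^k)"
      using u e by (simp add: abs_mult power_divide power_mult_distrib)
    moreover have "u powr a = u^k * u powr (a - real k)"
      using u by (simp add: powr_diff powr_realpow)
    ultimately show ?thesis
      using u e by (simp add: a_def[symmetric] C_def field_simps)
  qed
  have "integrable lborel (\<lambda>x. \<bar>x\<bar> ^ k * p_inf \<eta> x) \<longleftrightarrow> (\<lambda>u. C * ?q u) absolutely_integrable_on {0<..}"
    by (rule transfer(1)[OF e _ hh]) auto
  also have "\<dots> \<longleftrightarrow> ?q absolutely_integrable_on {0<..}"
    using C by (rule set_integrable_mult_right_iff)
  also have "\<dots> \<longleftrightarrow> a > real k - 1"
    using q_pos[OF a, of k] q_neg[OF a, of k] by force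
  finally show ?thesis by (simp add: a_def)
qed


lemma gT: fixes s c :: real shows "s > 0 \<Longrightarrow> ((\<lambda>u. c * (u powr (s-1) * exp (-u))) has_integral (c * Gamma s)) {0<..}"
  by (rule has_integral_mult_right) (rule gamma_T)

lemma gTa: fixes s c :: real shows "s > 0 \<Longrightarrow> (\<lambda>u. c * (u powr (s-1) * exp (-u))) absolutely_integrable_on {0<..}"
  using gamma_T_abs[of s] by (intro set_integrable_mult_right) auto

lemma partB:
  fixes \<eta> :: real
  assumes e: "\<eta> > 0"
  shows "(\<integral>x. x * p_inf \<eta> x \<partial>lborel) = 0"
proof -
  define a where "a = 2/\<eta>\<^sup>2"
  have a: "a > 0" using e by (simp add: a_def)
  have G1: "Gamma (a+1) > 0" using a by (intro Gamma_real_pos) simp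
  define C1 where "C1 = a / (\<eta> * Gamma (a+1))"
  define C2 where "C2 = 1 / (\<eta> * Gamma (a+1))"
  let ?h = "\<lambda>u. C1 * (u powr (a-1) * exp (-u)) - C2 * (u powr ((a+1)-1) * exp (-u))"
  have hh: "(2/\<eta>\<^sup>2/u - 1)/\<eta> * (u powr (2/\<eta>\<^sup>2) * exp (-u) / Gamma (2/\<eta>\<^sup>2 + 1)) = ?h u"
    if u: "u > 0" for u
  proof -
    have "u powr (a-1) = u powr a / u" using u by (simp add: powr_diff)
    then show ?thesis using u e G1 by (simp add: a_def[symmetric] C1_def C2_def field_simps)
  qed
  have hi: "?h absolutely_integrable_on {0<..}"
    by (intro set_integral_diff(1) gTa) (use a in auto)
  have hint: "(?h has_integral (C1 * Gamma a - C2 * Gamma (a+1))) {0<..}"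
    by (intro has_integral_diff gT) (use a in auto)
  have "(\<integral>x. x * p_inf \<eta> x \<partial>lborel) = integral {0<..} ?h"
    by (rule transfer(2)[OF e _ hh hi]) auto
  also have "\<dots> = C1 * Gamma a - C2 * Gamma (a+1)" using hint by (rule integral_unique)
  also have "\<dots> = 0"
  proof -
    have "Gamma (a+1) = a * Gamma a" using Gp1 a by simp
    then show ?thesis using e G1 a by (simp add: C1_def C2_def field_simps)
  qed
  finally show ?thesis .
qed

lemma partC:
  fixes \<eta> :: real
  assumes e: "\<eta> > 0" and e2: "\<eta>\<^sup>2 < 2"
  shows "(\<integral>x. x\<^sup>2 * p_inf \<eta> x \<partial>lborel) = 1 / (2 - \<eta>\<^sup>2)"
proof -
  define a where "a = 2/\<eta>\<^sup>2"
  have a: "a > 1" using e e2 by (simp add: a_def field_simps)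
  have G1: "Gamma (a+1) > 0" using a by (intro Gamma_real_pos) simp
  have G0: "Gamma (a-1) > 0" using a by (intro Gamma_real_pos) simp
  define D where "D = 1 / (\<eta>\<^sup>2 * Gamma (a+1))"
  let ?h = "\<lambda>u. (D * a\<^sup>2) * (u powr ((a-1)-1) * exp (-u)) - (D * 2 * a) * (u powr (a-1) * exp (-u))
              + D * (u powr ((a+1)-1) * exp (-u))"
  have hh: "((2/\<eta>\<^sup>2/u - 1)/\<eta>)\<^sup>2 * (u powr (2/\<eta>\<^sup>2) * exp (-u) / Gamma (2/\<eta>\<^sup>2 + 1)) = ?h u"
    if u: "u > 0" for u
  proof -
    have p1: "u powr (a-1) = u powr a / u" using u by (simp add: powr_diff)
    have p2: "u powr ((a-1)-1) = u powr a / u\<^sup>2"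
      using u by (simp add: powr_diff diff_diff_eq powr_numeral)
    show ?thesis using u e G1 unfolding a_def[symmetric] p1 p2
      by (simp add: a_def[symmetric] D_def field_simps power2_eq_square)
  qed
  have hi: "?h absolutely_integrable_on {0<..}"
    by (intro set_integral_add set_integral_diff(1) gTa) (use a in auto)
  have hint: "(?h has_integral (D * a\<^sup>2 * Gamma (a-1) - D * 2 * a * Gamma a + D * Gamma (a+1))) {0<..}"
    by (intro has_integral_add has_integral_diff gT) (use a in auto)
  have "(\<integral>x. x\<^sup>2 * p_inf \<eta> x \<partial>lborel) = integral {0<..} ?h"
    by (rule transfer(2)[OF e _ hh hi]) auto
  also have "\<dots> = D * a\<^sup>2 * Gamma (a-1) - D * 2 * a * Gamma a + D * Gamma (a+1)"
    using hint by (rule integral_unique)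
  also have "\<dots> = 1 / (2 - \<eta>\<^sup>2)"
  proof -
    have g1: "Gamma a = (a-1) * Gamma (a-1)" using Gp1[of "a-1"] a by simp
    have g2: "Gamma (a+1) = a * (a-1) * Gamma (a-1)" using Gp1[of a] a g1 by simp
    have eq: "2 - \<eta>\<^sup>2 = \<eta>\<^sup>2 * (a - 1)" using e by (simp add: a_def field_simps)
    have "D * a\<^sup>2 * Gamma (a-1) - D * 2 * a * Gamma a + D * Gamma (a+1) = D * (a * Gamma (a-1))"
      unfolding g2 g1 by (simp add: algebra_simps power2_eq_square)
    also have "\<dots> = 1 / (\<eta>\<^sup>2 * (a - 1))"
    proof -
      have "Gamma (a-1) \<noteq> 0" using G0 by linarith
      then show ?thesis unfolding D_def g2 using e a by (simp add: field_simps)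
    qed
    also have "\<dots> = 1 / (2 - \<eta>\<^sup>2)" using eq by simp
    finally show ?thesis .
  qed
  finally show ?thesis .
qed


theorem mainTheorem2:
  fixes \<eta> :: real
  assumes "\<eta> > 0"
  shows "(\<forall>k::nat. k \<ge> 1 \<longrightarrow>
            (integrable lborel (\<lambda>x. \<bar>x\<bar> ^ k * p_inf \<eta> x)
             \<longleftrightarrow> (k = 1 \<or> \<eta> < sqrt (2 / (real k - 1)))))
       \<and> (\<integral>x. x * p_inf \<eta> x \<partial>lborel) = 0
       \<and> (\<eta>\<^sup>2 < 2 \<longrightarrow> (\<integral>x. x\<^sup>2 * p_inf \<eta> x \<partial>lborel) = 1 / (2 - \<eta>\<^sup>2))"
proof (intro conjI allI impI)
  fix k :: nat assume k: "k \<ge> 1"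
  have "(k = 1 \<or> \<eta> < sqrt (2 / (real k - 1))) \<longleftrightarrow> 2/\<eta>\<^sup>2 > real k - 1"
  proof (cases "k = 1")
    case True then show ?thesis using assms by simp
  next
    case False
    then have k2: "real k - 1 > 0" using k by simp
    have "\<eta> < sqrt (2 / (real k - 1)) \<longleftrightarrow> sqrt (\<eta>\<^sup>2) < sqrt (2 / (real k - 1))"
      using assms by simp
    also have "\<dots> \<longleftrightarrow> \<eta>\<^sup>2 < 2 / (real k - 1)" by (rule real_sqrt_less_iff)
    also have "\<dots> \<longleftrightarrow> 2/\<eta>\<^sup>2 > real k - 1" using k2 assms by (simp add: field_simps)
    finally show ?thesis using False by simp
  qed
  then show "integrable lborel (\<lambda>x. \<bar>x\<bar> ^ k * p_inf \<eta> x) \<longleftrightarrow> (k = 1 \<or> \<eta> < sqrt (2 / (real k - 1)))"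
    using partA[OF assms k] by simp
next
  show "(\<integral>x. x * p_inf \<eta> x \<partial>lborel) = 0" by (rule partB[OF assms])
next
  assume "\<eta>\<^sup>2 < 2"
  then show "(\<integral>x. x\<^sup>2 * p_inf \<eta> x \<partial>lborel) = 1 / (2 - \<eta>\<^sup>2)" by (rule partC[OF assms])
qed

end
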